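(* Let $N\ge 1$ and let $f,g,h,s,\mu,\theta,\nu$ be the following Casoratians built from the column vector $\boldsymbol\psi(l)$ defined in the context: $$f=|0,1,\dots,N-1|,\quad g=|0,\dots,N-2,N|,\quad h=|0,\dots,N-2,N+1|,\quad s=|0,\dots,N-3,N-1,N|,$$ $$\mu=|0,\dots,N-2,N+2|,\quad \theta=|0,\dots,N-3,N-1,N+1|,\quad \nu=|0,\dots,N-4,N-2,N-1,N|.$$ Then, as functions of $(n,m)\in\mathbb Z^2$ (with $\alpha,\beta$ fixed), they satisfy the bilinear system (GD-4 (B-2) bilinear form) $$\widetilde f(pg+h)-\widetilde g(pf+g)+f\widetilde s=0,\qquad \widehat f(qg+h)-\widehat g(qf+g)+f\widehat s=0,$$ $$\widetilde f(ph+\mu)-\widetilde h(pf+g)+f\widetilde\theta=0,\qquad \widehat f(qh+\mu)-\widehat h(qf+g)+f\widehat\theta=0,$$ $$\widetilde f(ps+\theta)-f(p\widetilde s-\widetilde\nu)-\widetilde g s=0,\qquad \widehat f(qs+\theta)-f(q\widehat s-\widehat\nu)-\widehat g s=0,$$ $$(p-q)(\widetilde f\widehat f-f\widehat{\widetilde f})+\widetilde f\widehat g-\widehat f\widetilde g=0,$$ $$\frac{G(-p,-q)}{p-q}(f\widehat{\widetilde f}-\widetilde f\widehat f)+H(p,q)(g\widehat{\widetilde f}-f\widehat{\widetilde g})-(p+q-\alpha_3)(g\widehat{\widetilde g}-f\widehat{\widetilde h}-\widehat{\widetilde f}s)+g\widehat{\widetilde h}-s\widehat{\widetilde g}-f\widehat{\widetilde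 \mu}+\nu\widehat{\widetilde f}=0.$$
   Context: Fix $\alpha_1,\alpha_2,\alpha_3\in\mathbb C$ and put $G(\omega,k)=\omega^4-k^4+\alpha_3(\omega^3-k^3)+\alpha_2(\omega^2-k^2)+\alpha_1(\omega-k)$ and $H(p,q)=p^2+pq+q^2-\alpha_3(p+q)+\alpha_2$. Let $p,q,a,b\in\mathbb C$ be pairwise distinct parameters. Fix $N\ge1$ and $k_1,\dots,k_N\in\mathbb C$; for each $s$ let $\omega_1(k_s),\dots,\omega_4(k_s)$ be the four roots in $\omega$ of $G(-\omega,-k_s)=0$, i.e. of $\omega^4-\alpha_3\omega^3+\alpha_2\omega^2-\alpha_1\omega=k_s^4-\alpha_3k_s^3+\alpha_2k_s^2-\alpha_1k_s$, with $\omega_4(k_s)=k_s$. For arbitrary constants $\rho^{(0)}_{j,s}\in\mathbb C$ define, for $(n,m,\alpha,\beta,l)\in\mathbb Z^5$, $\psi_s(n,m,\alpha,\beta,l)=\sum_{j=1}^4\rho^{(0)}_{j,s}(-\omega_j(k_s))^l(p-\omega_j(k_s))^n(q-\omega_j(k_s))^m(a-\omega_j(k_s))^\alpha(b-\omega_j(k_s))^\beta$, and $\boldsymbol\psi(l)=(\psi_1,\dots,\psi_N)^T$ (dependence on $n,m,\alpha,\beta$ suppressed). Casoratian notation: $|l_1,\dots,l_N|=\det(\boldsymbol\psi(l_1),\dots,\boldsymbol\psi(l_N))$; a run "$0,\dots,j$" with $j<0$ is empty, and if the listed indices number more than $N$ (possible only for small $N$) the symbol is defined to be $0$. Shift notation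 for a function $F(n,m)$: $\widetilde F=F(n+1,m)$, $\widehat F=F(n,m+1)$, $\widehat{\widetilde F}=F(n+1,m+1)$. *)

theory Defs
  imports Complex_Main "Jordan_Normal_Form.Determinant"
begin

definition G4 :: "complex \<Rightarrow> complex \<Rightarrow> complex \<Rightarrow> complex \<Rightarrow> complex \<Rightarrow> complex" where
  "G4 \<alpha>1 \<alpha>2 \<alpha>3 w k = w^4 - k^4 + \<alpha>3 * (w^3 - k^3) + \<alpha>2 * (w^2 - k^2) + \<alpha>1 * (w - k)"

definition H2 :: "complex \<Rightarrow> complex \<Rightarrow> complex \<Rightarrow> complex \<Rightarrow> complex" where
  "H2 \<alpha>2 \<alpha>3 p q = p^2 + p*q + q^2 - \<alpha>3 * (p + q) + \<alpha>2"

definition psi :: "(nat \<Rightarrow> nat \<Rightarrow> complex) \<Rightarrow> (nat \<Rightarrow> nat \<Rightarrow> complex) \<Rightarrow>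
    complex \<Rightarrow> complex \<Rightarrow> complex \<Rightarrow> complex \<Rightarrow> nat \<Rightarrow> int \<Rightarrow> int \<Rightarrow> int \<Rightarrow> int \<Rightarrow> int \<Rightarrow> complex" where
  "psi \<omega> \<rho> p q a b s n m al be l =
     (\<Sum>j=1..4. \<rho> j s * (- \<omega> j s) powi l * (p - \<omega> j s) powi n * (q - \<omega> j s) powi m
                 * (a - \<omega> j s) powi al * (b - \<omega> j s) powi be)"

text \<open>Casoratian |l_1,...,l_L|: determinant of the N x N matrix whose j-th column is psi(l_j),
  row i being psi_(i+1); defined to be 0 if the number of listed indices differs from N
  (in all uses below it is never smaller than N).\<close>
definition casoratian :: "(nat \<Rightarrow> nat \<Rightarrow> complex) \<Rightarrow> (nat \<Rightarrow> nat \<Rightarrow> complex) \<Rightarrow>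
    complex \<Rightarrow> complex \<Rightarrow> complex \<Rightarrow> complex \<Rightarrow> nat \<Rightarrow> int \<Rightarrow> int \<Rightarrow> int \<Rightarrow> int \<Rightarrow> int list \<Rightarrow> complex" where
  "casoratian \<omega> \<rho> p q a b N n m al be L =
     (if length L = N
      then det (mat N N (\<lambda>(i, j). psi \<omega> \<rho> p q a b (Suc i) n m al be (L ! j)))
      else 0)"

end

theory Submission
  imports Defs
begin

definition Dt :: "nat \<Rightarrow> (nat \<Rightarrow> complex) list \<Rightarrow> complex" where
  "Dt N L = (if length L = N then det (mat N N (\<lambda>(i,j). (L!j) i)) else 0)"

lemma Dt_len: "length L \<noteq> N \<Longrightarrow> Dt N L = 0"
  by (simp add: Dt_def)

lemma nth_upd_same_other: "j \<noteq> length A \<Longrightarrow> (A @ z # B) ! j = (A @ z' # B) ! j"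
  by (auto simp: nth_append nth_Cons split: nat.splits)

lemma Dt_rep: "\<exists>K. \<forall>z. Dt N (A @ z # B) = (\<Sum>i<N. z i * K i)"
proof (cases "length (A @ z # B) = N")
  case False
  then show ?thesis by (intro exI[of _ "\<lambda>_. 0"]) (simp add: Dt_def)
next
  case True
  define k where "k = length A"
  have kN: "k < N" using True k_def by simp
  define M where "M = (\<lambda>z. mat N N (\<lambda>(i,j). ((A @ z # B)!j) i) :: complex mat)"
  have del: "mat_delete (M z) i k = mat_delete (M z') i k" for z z' i
  proof -
    have "\<And>i' j'. i' < N - 1 \<Longrightarrow> j' < N - 1 \<Longrightarrow>
       M z $$ (if i' < i then i' else Suc i', if j' < k then j' else Suc j') =
       M z' $$ (if i' < i then i' else Suc i', if j' < k then j' else Suc j')"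
    proof -
      fix i' j' assume "i' < N - 1" "j' < N - 1"
      let ?j = "if j' < k then j' else Suc j'"
      have "?j \<noteq> length A" by (auto simp: k_def)
      hence "(A @ z # B) ! ?j = (A @ z' # B) ! ?j" by (rule nth_upd_same_other)
      then show "M z $$ (if i' < i then i' else Suc i', ?j) = M z' $$ (if i' < i then i' else Suc i', ?j)"
        unfolding M_def using \<open>i' < N - 1\<close> \<open>j' < N - 1\<close> by (auto split: if_splits)
    qed
    then show ?thesis unfolding mat_delete_def by (auto simp: M_def)
  qed
  show ?thesis
  proof (intro exI allI)
    fix z'
    have "Dt N (A @ z' # B) = det (M z')" using True by (simp add: Dt_def M_def)
    also have "\<dots> = (\<Sum>i<N. M z' $$ (i,k) * cofactor (M z') i k)"
      by (rule laplace_expansion_column) (auto simp: M_def kN)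
    also have "\<dots> = (\<Sum>i<N. z' i * cofactor (M z) i k)"
    proof (rule sum.cong[OF refl])
      fix i assume "i \<in> {..<N}"
      then have "M z' $$ (i,k) = z' i" using kN unfolding k_def by (auto simp: M_def nth_append)
      moreover have "cofactor (M z') i k = cofactor (M z) i k" unfolding cofactor_def by (simp add: del[of z' _ z])
      ultimately show "M z' $$ (i,k) * cofactor (M z') i k = z' i * cofactor (M z) i k" by simp
    qed
    finally show "Dt N (A @ z' # B) = (\<Sum>i<N. z' i * cofactor (M z) i k)" .
  qed
qed

lemma Dt_lin2: "Dt N (A @ (\<lambda>i. a * x i + b * y i) # B) = a * Dt N (A @ x # B) + b * Dt N (A @ y # B)"
proof -
  obtain K where K: "\<And>z. Dt N (A @ z # B) = (\<Sum>i<N. z i * K i)" using Dt_rep by blast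
  show ?thesis unfolding K by (simp add: sum.distrib sum_distrib_left algebra_simps)
qed

lemma Dt_add: "Dt N (A @ (\<lambda>i. x i + y i) # B) = Dt N (A @ x # B) + Dt N (A @ y # B)"
  using Dt_lin2[of N A 1 x 1 y B] by simp

lemma Dt_smult: "Dt N (A @ (\<lambda>i. a * x i) # B) = a * Dt N (A @ x # B)"
  using Dt_lin2[of N A a x 0 x B] by simp

lemma Dt_sum: "finite S \<Longrightarrow> Dt N (A @ (\<lambda>i. \<Sum>j\<in>S. c j * x j i) # B) = (\<Sum>j\<in>S. c j * Dt N (A @ x j # B))"
proof -
  obtain K where K: "\<And>z. Dt N (A @ z # B) = (\<Sum>i<N. z i * K i)" using Dt_rep by blast
  show ?thesis unfolding K by (simp add: sum_distrib_left sum_distrib_right sum.swap[of _ S] algebra_simps)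
qed

lemma Dt_zero: "Dt N (A @ (\<lambda>i. 0) # B) = 0"
  using Dt_smult[of N A 0 "\<lambda>i. 0" B] by simp

lemma Dt_nd: assumes "\<not> distinct L" shows "Dt N L = 0"
proof (cases "length L = N")
  case False then show ?thesis by (simp add: Dt_def)
next
  case True
  from assms obtain a b where ab: "a < length L" "b < length L" "a \<noteq> b" "L!a = L!b"
    by (auto simp: distinct_conv_nth)
  let ?M = "mat N N (\<lambda>(i,j). (L!j) i) :: complex mat"
  have "det ?M = 0"
    by (rule det_identical_columns[of _ N a b]) (use ab True in auto)
  then show ?thesis using True by (simp add: Dt_def)
qed

lemma Dt_swap: "Dt N (A @ x # y # B) = - Dt N (A @ y # x # B)"
proof -
  let ?s = "\<lambda>i. x i + y i"
  have "0 = Dt N (A @ ?s # ?s # B)" by (simp add: Dt_nd)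
  also have "\<dots> = Dt N (A @ x # ?s # B) + Dt N (A @ y # ?s # B)" by (rule Dt_add)
  also have "Dt N (A @ x # ?s # B) = Dt N ((A @ [x]) @ ?s # B)" by simp
  also have "\<dots> = Dt N ((A @ [x]) @ x # B) + Dt N ((A @ [x]) @ y # B)" by (rule Dt_add)
  also have "Dt N (A @ y # ?s # B) = Dt N ((A @ [y]) @ ?s # B)" by simp
  also have "\<dots> = Dt N ((A @ [y]) @ x # B) + Dt N ((A @ [y]) @ y # B)" by (rule Dt_add)
  finally have "Dt N (A @ x # y # B) + Dt N (A @ y # x # B) = 0" by (simp add: Dt_nd)
  then show ?thesis by (simp add: eq_neg_iff_add_eq_0)
qed

lemma Dt_rot: "Dt N (A @ x # L) = (-1)^length L * Dt N (A @ L @ [x])"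
proof (induction L arbitrary: A)
  case Nil then show ?case by simp
next
  case (Cons y L)
  have "Dt N (A @ x # y # L) = - Dt N ((A @ [y]) @ x # L)" using Dt_swap[of N A x y L] by simp
  also have "\<dots> = - ((-1)^length L * Dt N ((A @ [y]) @ L @ [x]))" using Cons.IH[of "A @ [y]"] by simp
  finally show ?case by simp
qed

lemma nth_del: "j < Suc N \<Longrightarrow> length B = Suc N \<Longrightarrow> c < N \<Longrightarrow>
   (take j B @ drop (Suc j) B) ! c = B ! (if c < j then c else Suc c)"
  by (auto simp: nth_append min_def)

lemma Dt_cramer: assumes len: "length B = Suc N" and i: "i < N"
  shows "(\<Sum>k<Suc N. (-1)^k * Dt N (take k B @ drop (Suc k) B) * (B!k) i) = 0"
proof -
  define M where "M = (mat (Suc N) (Suc N) (\<lambda>(r,j). (B!j) (if r = N then i else r)) :: complex mat)"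
  have M: "M \<in> carrier_mat (Suc N) (Suc N)" by (simp add: M_def)
  have "det M = 0"
    by (rule det_identical_rows[OF M, of i N]) (use i in \<open>auto simp: M_def\<close>)
  moreover have "det M = (\<Sum>j<Suc N. M $$ (N,j) * cofactor M N j)"
    by (rule laplace_expansion_row[OF M]) simp
  moreover have "cofactor M N j = (-1)^(N+j) * Dt N (take j B @ drop (Suc j) B)" if j: "j < Suc N" for j
  proof -
    have "mat_delete M N j = mat N N (\<lambda>(r,c). ((take j B @ drop (Suc j) B) ! c) r)"
      unfolding mat_delete_def M_def by (rule eq_matI) (use j len in \<open>auto simp: nth_del\<close>)
    moreover have "length (take j B @ drop (Suc j) B) = N" using j len by auto
    ultimately show ?thesis unfolding cofactor_def Dt_def by simp
  qed
  ultimately have "(\<Sum>j<Suc N. (B!j) i * ((-1)^(N+j) * Dt N (take j B @ drop (Suc j) B))) = 0"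
    by (simp add: M_def)
  then have "(-1)^N * (\<Sum>j<Suc N. (B!j) i * ((-1)^(N+j) * Dt N (take j B @ drop (Suc j) B))) = 0" by simp
  then show ?thesis
    by (simp add: sum_distrib_left power_add algebra_simps flip: power_mult_distrib)
qed

lemma Dt_cramer_phi: assumes len: "length B = Suc N" and phi: "\<And>z. \<phi> z = (\<Sum>i<N. z i * K i)"
  shows "(\<Sum>k<Suc N. (-1)^k * Dt N (take k B @ drop (Suc k) B) * \<phi> (B!k)) = 0"
proof -
  have "(\<Sum>k<Suc N. (-1)^k * Dt N (take k B @ drop (Suc k) B) * \<phi> (B!k))
     = (\<Sum>i<N. K i * (\<Sum>k<Suc N. (-1)^k * Dt N (take k B @ drop (Suc k) B) * (B!k) i))"
    unfolding phi by (simp add: sum_distrib_left sum_distrib_right sum.swap[of _ "{..<N}"] algebra_simps)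
  also have "\<dots> = 0" using Dt_cramer[OF len] by simp
  finally show ?thesis .
qed

lemma Dt_lin1: "Dt N (A @ (\<lambda>i. a * x i + y i) # B) = a * Dt N (A @ x # B) + Dt N (A @ y # B)"
  using Dt_lin2[of N A a x 1 y B] by simp

lemma Dt_dup: "z \<in> set A \<Longrightarrow> Dt N (A @ z # B) = 0"
  by (rule Dt_nd) simp

lemma Dt_exp: assumes y: "\<And>j. y j = (\<lambda>i. c * x j i + x (Suc j) i)"
  shows "Dt N (map y [0..<K] @ R) = (\<Sum>k\<le>K. c^k * Dt N (map x ([0..<k] @ [Suc k..<Suc K]) @ R))"
proof (induction K arbitrary: R)
  case 0 then show ?case by simp
next
  case (Suc K)
  have "Dt N (map y [0..<Suc K] @ R) = Dt N (map y [0..<K] @ y K # R)" by simp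
  also have "\<dots> = c * Dt N (map y [0..<K] @ x K # R) + Dt N (map y [0..<K] @ x (Suc K) # R)"
    unfolding y[of K] by (rule Dt_lin1)
  also have "Dt N (map y [0..<K] @ x K # R) = (\<Sum>k\<le>K. c^k * Dt N (map x ([0..<k] @ [Suc k..<Suc K]) @ x K # R))"
    using Suc.IH[of "x K # R"] by simp
  also have "\<dots> = c^K * Dt N (map x [0..<Suc K] @ R)"
  proof -
    have "\<forall>k<K. Dt N (map x ([0..<k] @ [Suc k..<Suc K]) @ x K # R) = 0"
      by (intro allI impI Dt_nd) simp
    then have "(\<Sum>k\<le>K. c^k * Dt N (map x ([0..<k] @ [Suc k..<Suc K]) @ x K # R))
       = (\<Sum>k\<in>{K}. c^k * Dt N (map x ([0..<k] @ [Suc k..<Suc K]) @ x K # R))"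
      by (intro sum.mono_neutral_right) auto
    then show ?thesis by simp
  qed
  also have "Dt N (map y [0..<K] @ x (Suc K) # R) = (\<Sum>k\<le>K. c^k * Dt N (map x ([0..<k] @ [Suc k..<Suc (Suc K)]) @ R))"
    using Suc.IH[of "x (Suc K) # R"] by simp
  finally show ?case by (simp add: algebra_simps)
qed

lemma Dt_tri: assumes y0: "y 0 = x 0" and y: "\<And>l. y (Suc l) = (\<lambda>i. c * x l i + x (Suc l) i)"
  shows "Dt N (map x [0..<K] @ R) = Dt N (map y [0..<K] @ R)"
proof (induction K arbitrary: R)
  case 0 then show ?case by simp
next
  case (Suc K)
  have "Dt N (map x [0..<Suc K] @ R) = Dt N (map x [0..<K] @ x K # R)" by simp
  also have "\<dots> = Dt N (map x [0..<K] @ y K # R)"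
  proof (cases K)
    case 0 then show ?thesis by (simp add: y0)
  next
    case (Suc K')
    have "Dt N (map x [0..<K] @ y K # R) = c * Dt N (map x [0..<K] @ x K' # R) + Dt N (map x [0..<K] @ x K # R)"
      unfolding Suc y by (rule Dt_lin1)
    also have "Dt N (map x [0..<K] @ x K' # R) = 0" by (rule Dt_dup) (simp add: Suc)
    finally show ?thesis by simp
  qed
  also have "\<dots> = Dt N (map y [0..<K] @ y K # R)" by (rule Suc.IH)
  finally show ?case by simp
qed

lemma del_upt: "k < Suc N \<Longrightarrow> take k (map x [0..<Suc N]) @ drop (Suc k) (map x [0..<Suc N]) = map x ([0..<k] @ [Suc k..<Suc N])"
  by (simp add: take_map drop_map)

lemma cramer_upt: assumes phi: "\<And>z. \<phi> z = (\<Sum>i<N. z i * K i)"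
  shows "(\<Sum>k<Suc N. (-1)^k * Dt N (map x ([0..<k] @ [Suc k..<Suc N])) * \<phi> (x k)) = 0"
proof -
  have "(\<Sum>k<Suc N. (-1)^k * Dt N (map x ([0..<k] @ [Suc k..<Suc N])) * \<phi> (x k))
    = (\<Sum>k<Suc N. (-1)^k * Dt N (take k (map x [0..<Suc N]) @ drop (Suc k) (map x [0..<Suc N])) * \<phi> (map x [0..<Suc N] ! k))"
    by (rule sum.cong[OF refl]) (simp add: del_upt nth_map del: upt_Suc)
  also have "\<dots> = 0" by (rule Dt_cramer_phi[OF _ phi]) simp
  finally show ?thesis .
qed

lemma eq1_abs:
  assumes N: "1 \<le> N" and t: "\<And>k. t k = (\<lambda>i. p * u k i + u (Suc k) i)"
  shows "Dt N (map t [0..<N]) * (p * Dt N (map u ([0..<N-1]@[N])) + Dt N (map u ([0..<N-1]@[N+1])))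
   - Dt N (map t ([0..<N-1]@[N])) * (p * Dt N (map u [0..<N]) + Dt N (map u ([0..<N-1]@[N])))
   + Dt N (map u [0..<N]) * (if 2 \<le> N then Dt N (map t ([0..<N-2]@[N-1,N])) else 0) = 0" (is "?E = 0")
proof -
  define P where "P = map u [0..<N-1]"
  obtain K where K: "\<And>z. Dt N (P @ z # []) = (\<Sum>i<N. z i * K i)" using Dt_rep by blast
  define F where "F k = (-1)^k * Dt N (map t ([0..<k] @ [Suc k..<Suc N])) * Dt N (P @ [t k])" for k
  have cr: "(\<Sum>k<Suc N. F k) = 0"
    unfolding F_def by (rule cramer_upt[where \<phi>="\<lambda>z. Dt N (P @ [z])" and K=K]) (rule K)
  have phi: "Dt N (A @ [t k]) = p * Dt N (A @ [u k]) + Dt N (A @ [u (Suc k)])" for k A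
    unfolding t by (rule Dt_lin1)
  have mem: "j < N - 1 \<Longrightarrow> Dt N (P @ [u j]) = 0" for j
    by (rule Dt_nd) (simp add: P_def)
  have van0: "F k = 0" if "k + 3 \<le> N" for k
    unfolding F_def phi using that by (simp add: mem)
  show ?thesis
  proof (cases N)
    case 0 then show ?thesis using N by simp
  next
    case (Suc M)
    show ?thesis
    proof (cases M)
      case 0
      have "F 0 + F 1 = 0" using cr \<open>N = Suc M\<close> 0 by (simp add: numeral_2_eq_2)
      then show ?thesis using \<open>N = Suc M\<close> 0 phi[where A="[]", simplified] by (simp add: F_def P_def algebra_simps)
    next
      case (Suc M')
      have van: "F k = 0" if "k < M'" for k
        using van0[of k] that \<open>N = Suc M\<close> Suc by simp
      have "(\<Sum>k<Suc N. F k) = F M' + F (Suc M') + F (Suc (Suc M'))"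
        using van \<open>N = Suc M\<close> Suc by simp
      with cr have "F M' + F (Suc M') + F (Suc (Suc M')) = 0" by simp
      moreover have "F M' + F (Suc M') + F (Suc (Suc M')) = (-1)^M' * ?E"
        unfolding F_def phi P_def using \<open>N = Suc M\<close> Suc
        by (simp add: Dt_nd algebra_simps)
      ultimately show ?thesis by simp
    qed
  qed
qed

lemma cramer_list: assumes len: "length L = Suc N" and phi: "\<And>z. \<phi> z = (\<Sum>i<N. z i * K i)"
  shows "(\<Sum>k<Suc N. (-1)^k * Dt N (map x (take k L @ drop (Suc k) L)) * \<phi> (x (L!k))) = 0"
proof -
  have "(\<Sum>k<Suc N. (-1)^k * Dt N (map x (take k L @ drop (Suc k) L)) * \<phi> (x (L!k)))
    = (\<Sum>k<Suc N. (-1)^k * Dt N (take k (map x L) @ drop (Suc k) (map x L)) * \<phi> (map x L ! k))"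
    by (rule sum.cong[OF refl]) (use len in \<open>simp add: take_map drop_map\<close>)
  also have "\<dots> = 0" by (rule Dt_cramer_phi[OF _ phi]) (simp add: len)
  finally show ?thesis .
qed

lemma eq3_abs:
  assumes N: "1 \<le> N" and t: "\<And>k. t k = (\<lambda>i. p * u k i + u (Suc k) i)"
  shows "Dt N (map t [0..<N]) * (p * Dt N (map u ([0..<N-1]@[N+1])) + Dt N (map u ([0..<N-1]@[N+2])))
   - Dt N (map t ([0..<N-1]@[N+1])) * (p * Dt N (map u [0..<N]) + Dt N (map u ([0..<N-1]@[N])))
   + Dt N (map u [0..<N]) * (if 2 \<le> N then Dt N (map t ([0..<N-2]@[N-1,N+1])) else 0) = 0" (is "?E = 0")
proof -
  define P where "P = map u [0..<N-1]"
  define L where "L = [0..<N] @ [Suc N]"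
  obtain K where K: "\<And>z. Dt N (P @ z # []) = (\<Sum>i<N. z i * K i)" using Dt_rep by blast
  define F where "F k = (-1)^k * Dt N (map t (take k L @ drop (Suc k) L)) * Dt N (P @ [t (L!k)])" for k
  have cr: "(\<Sum>k<Suc N. F k) = 0"
    unfolding F_def by (rule cramer_list[where \<phi>="\<lambda>z. Dt N (P @ [z])" and K=K]) (auto simp: L_def K)
  have phi: "Dt N (A @ [t k]) = p * Dt N (A @ [u k]) + Dt N (A @ [u (Suc k)])" for k A
    unfolding t by (rule Dt_lin1)
  have mem: "j < N - 1 \<Longrightarrow> Dt N (P @ [u j]) = 0" for j
    by (rule Dt_nd) (simp add: P_def)
  have van0: "F k = 0" if "k + 3 \<le> N" for k
  proof -
    have "L ! k = k" using that by (simp add: L_def nth_append)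
    then show ?thesis unfolding F_def phi using that by (simp add: mem)
  qed
  show ?thesis
  proof (cases N)
    case 0 then show ?thesis using N by simp
  next
    case (Suc M)
    show ?thesis
    proof (cases M)
      case 0
      have "F 0 + F 1 = 0" using cr \<open>N = Suc M\<close> 0 by (simp add: numeral_2_eq_2)
      then show ?thesis unfolding F_def phi using \<open>N = Suc M\<close> 0 phi[where A="[]", simplified] by (simp add: P_def L_def algebra_simps)
    next
      case (Suc M')
      have van: "F k = 0" if "k < M'" for k
        using van0[of k] that \<open>N = Suc M\<close> Suc by simp
      have "(\<Sum>k<Suc N. F k) = F M' + F (Suc M') + F (Suc (Suc M'))"
        using van \<open>N = Suc M\<close> Suc by simp
      with cr have "F M' + F (Suc M') + F (Suc (Suc M')) = 0" by simp
      moreover have "F M' + F (Suc M') + F (Suc (Suc M')) = (-1)^M' * ?E"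
        unfolding F_def phi P_def L_def using \<open>N = Suc M\<close> Suc
        by (simp add: Dt_nd nth_append algebra_simps)
      ultimately show ?thesis by simp
    qed
  qed
qed

lemma eq5_abs:
  assumes N: "2 \<le> N" and t: "\<And>k. t k = (\<lambda>i. p * u k i + u (Suc k) i)"
  shows "Dt N (map t [0..<N]) * (p * Dt N (map u ([0..<N-2]@[N-1,N])) + Dt N (map u ([0..<N-2]@[N-1,N+1])))
   - Dt N (map u [0..<N]) * (p * Dt N (map t ([0..<N-2]@[N-1,N])) - (if 3 \<le> N then Dt N (map t ([0..<N-3]@[N-2,N-1,N])) else 0))
   - Dt N (map t ([0..<N-1]@[N])) * Dt N (map u ([0..<N-2]@[N-1,N])) = 0" (is "?E = 0")
proof -
  define A where "A = map u ([0..<N-2] @ [N-1])"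
  obtain K where K: "\<And>z. Dt N (A @ z # []) = (\<Sum>i<N. z i * K i)" using Dt_rep by blast
  define F where "F k = (-1)^k * Dt N (map t ([0..<k] @ [Suc k..<Suc N])) * Dt N (A @ [t k])" for k
  have cr: "(\<Sum>k<Suc N. F k) = 0"
    unfolding F_def by (rule cramer_upt[where \<phi>="\<lambda>z. Dt N (A @ [z])" and K=K]) (rule K)
  have phi: "Dt N (B @ [t k]) = p * Dt N (B @ [u k]) + Dt N (B @ [u (Suc k)])" for k B
    unfolding t by (rule Dt_lin1)
  have mem: "j < N - 2 \<Longrightarrow> Dt N (A @ [u j]) = 0" for j
    by (rule Dt_nd) (simp add: A_def)
  have van0: "F k = 0" if "k + 4 \<le> N" for k
    unfolding F_def phi using that by (simp add: mem)
  obtain M where M: "N = Suc (Suc M)" using N by (metis add_2_eq_Suc le_Suc_ex)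
  show ?thesis
  proof (cases M)
    case 0
    have "F 0 + F 1 + F 2 = 0" using cr M 0 by (simp add: numeral_2_eq_2 numeral_3_eq_3)
    moreover have "F 0 + F 1 + F 2 = ?E"
      unfolding F_def phi A_def using M 0
      by (simp add: Dt_nd numeral_2_eq_2 Dt_swap[of _ "[]" "u (Suc 0)" "u 0" "[]", simplified] algebra_simps)
    ultimately show ?thesis by simp
  next
    case (Suc M')
    have van: "F k = 0" if "k < M'" for k
      using van0[of k] that M Suc by simp
    have "(\<Sum>k<Suc N. F k) = F M' + F (Suc M') + F (Suc (Suc M')) + F (Suc (Suc (Suc M')))"
      using van M Suc by simp
    with cr have "F M' + F (Suc M') + F (Suc (Suc M')) + F (Suc (Suc (Suc M'))) = 0" by simp
    moreover have "F M' + F (Suc M') + F (Suc (Suc M')) + F (Suc (Suc (Suc M'))) = (-1)^(Suc M') * ?E"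
      unfolding F_def phi A_def using M Suc
      by (simp add: Dt_nd Dt_swap[of _ "map u [0..<M'] @ [u M']" "u (Suc (Suc M'))" "u (Suc M')" "[]", simplified] algebra_simps)
    ultimately show ?thesis by simp
  qed
qed

lemma geo_rec:
  fixes a b :: "nat \<Rightarrow> complex"
  assumes rec: "\<And>k. b k = c * a k + a (Suc k)" and z: "\<And>k. k < M \<Longrightarrow> b k = 0"
  shows "k \<le> M \<Longrightarrow> a k = (-c)^k * a 0"
proof (induction k)
  case 0 then show ?case by simp
next
  case (Suc k)
  have "a (Suc k) = b k - c * a k" using rec[of k] by simp
  also have "b k = 0" using z Suc.prems by simp
  finally show ?case using Suc by simp
qed

lemma Dt_head: assumes N: "N = Suc M" and y: "\<And>l. y l = (\<lambda>i. c * x l i + x (Suc l) i)"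
  shows "Dt N (map x [0..<N]) = (-1)^M * Dt N (map y [0..<M] @ [x 0])"
proof -
  define z where "z l = (if l = 0 then x 0 else y (l - 1))" for l
  have "Dt N (map x [0..<N] @ []) = Dt N (map z [0..<N] @ [])"
    by (rule Dt_tri[where c=c]) (auto simp: z_def y)
  also have "map z [0..<N] = x 0 # map y [0..<M]"
    unfolding N map_upt_Suc by (simp add: z_def)
  finally have "Dt N (map x [0..<N]) = Dt N ([] @ x 0 # map y [0..<M])" by simp
  also have "\<dots> = (-1)^M * Dt N (map y [0..<M] @ [x 0])" by (subst Dt_rot) simp
  finally show ?thesis .
qed

lemma sum_two_points:
  fixes a b n :: nat
  assumes "a \<noteq> b" "a < n" "b < n"
  shows "(\<Sum>k<n. (if k = a then X else if k = b then Y else 0)) = X + (Y::complex)"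
proof -
  have "(\<Sum>k<n. (if k = a then X else if k = b then Y else 0)) = (\<Sum>k<n. (if k = a then X else 0)) + (\<Sum>k<n. (if k = b then Y else 0))"
    by (subst sum.distrib[symmetric]) (rule sum.cong, use assms in auto)
  moreover have "(\<Sum>k<n. (if k = a then X else 0)) = X" using assms by simp
  moreover have "(\<Sum>k<n. (if k = b then Y else 0)) = Y" using assms by simp
  ultimately show ?thesis by simp
qed

lemma neg1_pow: "(-1::complex)^k * (-p)^k = p^k"
  by (simp flip: power_mult_distrib)

lemma eq7_abs:
  assumes N: "1 \<le> N" and t: "\<And>k. t k = (\<lambda>i. p * u k i + u (Suc k) i)"
    and r: "\<And>k. r k = (\<lambda>i. q * u k i + u (Suc k) i)"
    and v: "\<And>k. v k = (\<lambda>i. p * r k i + r (Suc k) i)"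
  shows "(p - q) * (Dt N (map t [0..<N]) * Dt N (map r [0..<N]) - Dt N (map u [0..<N]) * Dt N (map v [0..<N]))
    + Dt N (map t [0..<N]) * Dt N (map r ([0..<N-1]@[N])) - Dt N (map r [0..<N]) * Dt N (map t ([0..<N-1]@[N])) = 0"
    (is "?E = 0")
proof -
  obtain M where M: "N = Suc M" using N by (metis Suc_le_D One_nat_def)
  define T where "T = map t [0..<M]"
  obtain K where K: "\<And>z. Dt N (T @ z # []) = (\<Sum>i<N. z i * K i)" using Dt_rep by blast
  define d where "d k = Dt N (map r ([0..<k] @ [Suc k..<Suc N]))" for k
  define a where "a k = Dt N (T @ [u k])" for k
  define b where "b k = Dt N (T @ [t k])" for k
  define ft where "ft = Dt N (map t [0..<N])"
  define gt where "gt = Dt N (map t ([0..<N-1]@[N]))"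
  have cr: "(\<Sum>k<Suc N. (-1)^k * d k * Dt N (T @ [r k])) = 0"
    unfolding d_def by (rule cramer_upt[where \<phi>="\<lambda>z. Dt N (T @ [z])" and K=K]) (rule K)
  have rr: "r k = (\<lambda>i. (q - p) * u k i + t k i)" for k
    unfolding r t by (auto simp: algebra_simps)
  have rk: "Dt N (T @ [r k]) = (q - p) * a k + b k" for k
    unfolding rr a_def b_def by (rule Dt_lin1)
  have tk: "b k = p * a k + a (Suc k)" for k
    unfolding a_def b_def t by (rule Dt_lin1)
  have bz: "b k = 0" if "k < M" for k
    unfolding b_def by (rule Dt_nd) (use that in \<open>simp add: T_def\<close>)
  have bM: "b M = ft" by (simp add: b_def T_def M ft_def)
  have bN: "b N = gt" by (simp add: b_def T_def M gt_def)
  have ageo: "a k = (-p)^k * a 0" if "k \<le> M" for k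
    by (rule geo_rec[where b=b and a=a and c=p, OF tk bz that])
  have aN: "a N = ft + (-p)^N * a 0"
    using tk[of M] ageo[of M] bM M by (simp add: algebra_simps)
  have a0: "Dt N (map u [0..<N]) = (-1)^M * a 0"
    unfolding a_def T_def by (rule Dt_head[where y=t and x=u and c=p, OF M t])
  have expF: "Dt N (map v [0..<N]) = (\<Sum>k<Suc N. p^k * d k)"
    using Dt_exp[where y=v and x=r and c=p, OF v, of N N "[]"] by (simp add: d_def lessThan_Suc_atMost)
  have dN: "d N = Dt N (map r [0..<N])" by (simp add: d_def)
  have dM: "d M = Dt N (map r ([0..<N-1]@[N]))" by (simp add: d_def M)
  have trm: "(-1)^k * d k * Dt N (T @ [r k]) = (q - p) * a 0 * (p^k * d k)
      + (if k = N then (q - p) * (-1)^N * d N * ft else 0)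
      + (if k = M then (-1)^M * d M * ft else if k = N then (-1)^N * d N * gt else 0)"
    if k: "k < Suc N" for k
  proof -
    have "(-1)^k * d k * Dt N (T @ [r k]) = (-1)^k * d k * ((q - p) * a k + b k)" by (simp add: rk)
    moreover have "a k = (-p)^k * a 0 + (if k = N then ft else 0)"
      using ageo[of k] aN k M by (cases "k = N") auto
    moreover have "b k = (if k = M then ft else if k = N then gt else 0)"
    proof -
      have "k < M \<or> k = M \<or> k = N" using k M by linarith
      then show ?thesis using bz[of k] bM bN M by auto
    qed
    ultimately show ?thesis
      using neg1_pow[of k p] M by (auto simp: algebra_simps)
  qed
  have "0 = (\<Sum>k<Suc N. (-1)^k * d k * Dt N (T @ [r k]))" using cr by simp
  also have "\<dots> = (\<Sum>k<Suc N. (q - p) * a 0 * (p^k * d k)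
      + (if k = N then (q - p) * (-1)^N * d N * ft else 0)
      + (if k = M then (-1)^M * d M * ft else if k = N then (-1)^N * d N * gt else 0))"
    by (rule sum.cong[OF refl]) (rule trm, simp)
  also have "\<dots> = (q - p) * a 0 * Dt N (map v [0..<N]) + (q - p) * (-1)^N * d N * ft
      + ((-1)^M * d M * ft + (-1)^N * d N * gt)"
    unfolding sum.distrib expF sum_distrib_left[symmetric]
    by (subst sum_two_points) (use M in auto)
  finally have main: "0 = (q - p) * a 0 * Dt N (map v [0..<N]) + (q - p) * (-1)^N * d N * ft
      + ((-1)^M * d M * ft + (-1)^N * d N * gt)" .
  define Fv where "Fv = Dt N (map v [0..<N])"
  have E: "?E = (p - q) * (ft * d N - (-1)^M * a 0 * Fv) + ft * d M - d N * gt"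
    unfolding ft_def gt_def dN dM a0 Fv_def by simp
  have sN: "(-1::complex)^N = -((-1)^M)" using M by simp
  have ss: "(-1::complex)^M * (-1)^M = 1" by (simp flip: power_add mult_2)
  have "?E = (-1)^M * ((q - p) * a 0 * Dt N (map v [0..<N]) + (q - p) * (-1)^N * d N * ft
      + ((-1)^M * d M * ft + (-1)^N * d N * gt))"
    unfolding E unfolding sN Fv_def by (simp add: algebra_simps ss)
  then show ?thesis using main by simp
qed

lemma gamma_poly: assumes "p \<noteq> q"
  shows "G4 \<alpha>1 \<alpha>2 \<alpha>3 (-p) (-q) / (p - q) = p^3 + p^2*q + p*q^2 + q^3 - \<alpha>3 * (p^2 + p*q + q^2) + \<alpha>2 * (p + q) - \<alpha>1"
proof -
  have "p - q \<noteq> 0" using assms by simp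
  then show ?thesis unfolding G4_def by (simp add: field_simps) (simp add: algebra_simps power2_eq_square power3_eq_cube power4_eq_xxxx)
qed

lemma eq8_abs:
  assumes N: "1 \<le> N" and pq: "p \<noteq> q"
    and t: "\<And>k. t k = (\<lambda>i. p * u k i + u (Suc k) i)"
    and r: "\<And>k. r k = (\<lambda>i. q * u k i + u (Suc k) i)"
    and vt: "\<And>k. v k = (\<lambda>i. q * t k i + t (Suc k) i)"
    and C: "\<And>k. (\<lambda>i. c i * u k i) = (\<lambda>i. u (k+4) i + \<alpha>3 * u (k+3) i + \<alpha>2 * u (k+2) i + \<alpha>1 * u (k+1) i)"
  shows "G4 \<alpha>1 \<alpha>2 \<alpha>3 (-p) (-q) / (p - q) * (Dt N (map u [0..<N]) * Dt N (map v [0..<N]) - Dt N (map t [0..<N]) * Dt N (map r [0..<N]))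
    + H2 \<alpha>2 \<alpha>3 p q * (Dt N (map u ([0..<N-1]@[N])) * Dt N (map v [0..<N]) - Dt N (map u [0..<N]) * Dt N (map v ([0..<N-1]@[N])))
    - (p + q - \<alpha>3) * (Dt N (map u ([0..<N-1]@[N])) * Dt N (map v ([0..<N-1]@[N])) - Dt N (map u [0..<N]) * Dt N (map v ([0..<N-1]@[N+1]))
         - Dt N (map v [0..<N]) * (if 2 \<le> N then Dt N (map u ([0..<N-2]@[N-1,N])) else 0))
    + Dt N (map u ([0..<N-1]@[N])) * Dt N (map v ([0..<N-1]@[N+1])) - (if 2 \<le> N then Dt N (map u ([0..<N-2]@[N-1,N])) else 0) * Dt N (map v ([0..<N-1]@[N]))
    - Dt N (map u [0..<N]) * Dt N (map v ([0..<N-1]@[N+2]))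
    + (if 3 \<le> N then Dt N (map u ([0..<N-3]@[N-2,N-1,N])) else 0) * Dt N (map v [0..<N]) = 0"
    (is "?E = 0")
proof -
  define \<gamma> where "\<gamma> = G4 \<alpha>1 \<alpha>2 \<alpha>3 (-p) (-q) / (p - q)"
  define H where "H = H2 \<alpha>2 \<alpha>3 p q"
  define h where "h = p + q - \<alpha>3"
  obtain M where M: "N = Suc M" using N by (metis Suc_le_D One_nat_def)
  define V where "V = map v [0..<M]"
  obtain K where K: "\<And>z. Dt N (V @ z # []) = (\<Sum>i<N. z i * K i)" using Dt_rep by blast
  define d where "d k = Dt N (map u ([0..<k] @ [Suc k..<Suc N]))" for k
  define a where "a k = Dt N (V @ [u k])" for k
  define \<tau> where "\<tau> k = Dt N (V @ [t k])" for k
  define w where "w k = Dt N (V @ [v k])" for k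
  define X where "X k = w (k+2) - h * w (k+1) + H * w k" for k
  have VI: "(\<lambda>i. c i * u k i) = (\<lambda>i. 1 * v (k+2) i + ((-h) * v (k+1) i + (H * v k i + ((-\<gamma>) * u (k+1) i + (-(H*p*q)) * u k i))))" for k
  proof -
    have g: "\<gamma> = p^3 + p^2*q + p*q^2 + q^3 - \<alpha>3 * (p^2 + p*q + q^2) + \<alpha>2 * (p + q) - \<alpha>1"
      unfolding \<gamma>_def by (rule gamma_poly[OF pq])
    show ?thesis unfolding C vt t g H_def h_def H2_def
      by (rule ext) (simp add: algebra_simps power2_eq_square power3_eq_cube numeral_eq_Suc)
  qed
  have phiu: "Dt N (V @ [\<lambda>i. c i * u k i]) = X k - \<gamma> * a (k+1) - H*p*q * a k" for k
    unfolding VI X_def a_def w_def by (simp only: Dt_lin1 Dt_smult) (simp add: algebra_simps)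
  have cr: "(\<Sum>k<Suc N. (-1)^k * d k * Dt N (V @ [\<lambda>i. c i * u k i])) = 0"
    unfolding d_def by (rule cramer_upt[where \<phi>="\<lambda>z. Dt N (V @ [\<lambda>i. c i * z i])" and K="\<lambda>i. c i * K i"]) (simp add: K algebra_simps)
  have cr0: "(\<Sum>k<Suc N. (-1)^k * d k * a k) = 0"
    unfolding d_def a_def by (rule cramer_upt[where \<phi>="\<lambda>z. Dt N (V @ [z])" and K=K]) (rule K)
  have ta: "\<tau> k = p * a k + a (Suc k)" for k
    unfolding \<tau>_def a_def t by (rule Dt_lin1)
  have wt: "w k = q * \<tau> k + \<tau> (Suc k)" for k
    unfolding \<tau>_def w_def vt by (rule Dt_lin1)
  have wz: "w k = 0" if "k < M" for k
    unfolding w_def by (rule Dt_nd) (use that in \<open>simp add: V_def\<close>)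
  have wM: "w M = Dt N (map v [0..<N])" by (simp add: w_def V_def M)
  have tgeo: "\<tau> k = (-q)^k * \<tau> 0" if "k \<le> M" for k
    by (rule geo_rec[where b=w and a=\<tau> and c=q, OF wt wz that])
  have tN: "\<tau> N = Dt N (map v [0..<N]) + (-q)^N * \<tau> 0"
    using wt[of M] tgeo[of M] wM M by (simp add: algebra_simps)
  have t0: "Dt N (map t [0..<N]) = (-1)^M * \<tau> 0"
    unfolding \<tau>_def V_def by (rule Dt_head[where y=v and x=t and c=q, OF M vt])
  have expR: "Dt N (map r [0..<N]) = (\<Sum>k<Suc N. q^k * d k)"
    using Dt_exp[where y=r and x=u and c=q, OF r, of N N "[]"] by (simp add: d_def lessThan_Suc_atMost)
  have dN: "d N = Dt N (map u [0..<N])" by (simp add: d_def)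
  have ST: "(\<Sum>k<Suc N. (-1)^k * d k * \<tau> k) = \<tau> 0 * Dt N (map r [0..<N]) + (-1)^N * Dt N (map u [0..<N]) * Dt N (map v [0..<N])"
  proof -
    have "(\<Sum>k<Suc N. (-1)^k * d k * \<tau> k) = (\<Sum>k<Suc N. \<tau> 0 * (q^k * d k) + (if k = N then (-1)^N * d N * Dt N (map v [0..<N]) else 0))"
    proof (rule sum.cong[OF refl])
      fix k assume "k \<in> {..<Suc N}"
      then have k: "k < Suc N" by simp
      have "\<tau> k = (-q)^k * \<tau> 0 + (if k = N then Dt N (map v [0..<N]) else 0)"
        using tgeo[of k] tN k M by (cases "k = N") auto
      then show "(-1)^k * d k * \<tau> k = \<tau> 0 * (q^k * d k) + (if k = N then (-1)^N * d N * Dt N (map v [0..<N]) else 0)"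
        using neg1_pow[of k q] by (auto simp: algebra_simps)
    qed
    also have "\<dots> = \<tau> 0 * Dt N (map r [0..<N]) + (-1)^N * Dt N (map u [0..<N]) * Dt N (map v [0..<N])"
      unfolding sum.distrib expR sum_distrib_left[symmetric] by (simp add: dN)
    finally show ?thesis .
  qed
  have main: "(\<Sum>k<Suc N. (-1)^k * d k * X k) = \<gamma> * (\<tau> 0 * Dt N (map r [0..<N]) + (-1)^N * Dt N (map u [0..<N]) * Dt N (map v [0..<N]))"
  proof -
    have "0 = (\<Sum>k<Suc N. (-1)^k * d k * X k - \<gamma> * ((-1)^k * d k * \<tau> k) + (\<gamma> * p - H*p*q) * ((-1)^k * d k * a k))"
      unfolding cr[symmetric] by (rule sum.cong[OF refl]) (simp add: phiu ta algebra_simps)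
    also have "\<dots> = (\<Sum>k<Suc N. (-1)^k * d k * X k) - \<gamma> * (\<Sum>k<Suc N. (-1)^k * d k * \<tau> k)
        + (\<gamma> * p - H*p*q) * (\<Sum>k<Suc N. (-1)^k * d k * a k)"
      by (simp add: sum.distrib sum_subtractf sum_distrib_left del: sum.lessThan_Suc)
    also have "\<dots> = (\<Sum>k<Suc N. (-1)^k * d k * X k) - \<gamma> * (\<Sum>k<Suc N. (-1)^k * d k * \<tau> k)"
      unfolding cr0 by simp
    finally show ?thesis unfolding ST by simp
  qed
  define fD where "fD = Dt N (map u [0..<N])"
  define gD where "gD = Dt N (map u ([0..<N-1]@[N]))"
  define sD where "sD = (if 2 \<le> N then Dt N (map u ([0..<N-2]@[N-1,N])) else 0)"
  define nD where "nD = (if 3 \<le> N then Dt N (map u ([0..<N-3]@[N-2,N-1,N])) else 0)"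
  define FD where "FD = Dt N (map v [0..<N])"
  define GD where "GD = Dt N (map v ([0..<N-1]@[N]))"
  define HD where "HD = Dt N (map v ([0..<N-1]@[N+1]))"
  define MD where "MD = Dt N (map v ([0..<N-1]@[N+2]))"
  define ftD where "ftD = Dt N (map t [0..<N])"
  define frD where "frD = Dt N (map r [0..<N])"
  have top: "(-1)^N * (\<Sum>k<Suc N. (-1)^k * d k * X k) = fD*(MD - h*HD + H*GD) - gD*(HD - h*GD + H*FD) + sD*(GD - h*FD) - nD*FD"
  proof (cases M)
    case 0
    then show ?thesis using M
      by (simp add: d_def X_def w_def V_def fD_def gD_def sD_def nD_def FD_def GD_def HD_def MD_def algebra_simps)
  next
    case (Suc M1)
    show ?thesis
    proof (cases M1)
      case 0
      then show ?thesis using M Suc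
        by (simp add: d_def X_def w_def V_def fD_def gD_def sD_def nD_def FD_def GD_def HD_def MD_def Dt_nd algebra_simps numeral_eq_Suc)
    next
      case (Suc M')
      have van: "X k = 0" if "k < M'" for k
        unfolding X_def using wz[of k] wz[of "k+1"] wz[of "k+2"] that M Suc \<open>M = Suc M1\<close> by simp
      have "(\<Sum>k<Suc N. (-1)^k * d k * X k) = (-1)^M' * d M' * X M' + (-1)^(Suc M') * d (Suc M') * X (Suc M')
         + (-1)^(Suc (Suc M')) * d (Suc (Suc M')) * X (Suc (Suc M')) + (-1)^(Suc (Suc (Suc M'))) * d (Suc (Suc (Suc M'))) * X (Suc (Suc (Suc M')))"
        using van M Suc \<open>M = Suc M1\<close> by simp
      then show ?thesis using M Suc \<open>M = Suc M1\<close>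
        by (simp add: d_def X_def w_def V_def fD_def gD_def sD_def nD_def FD_def GD_def HD_def MD_def Dt_nd algebra_simps numeral_eq_Suc)
    qed
  qed
  have tau0: "\<tau> 0 = (-1)^M * ftD"
  proof -
    have "(-1::complex)^M * (-1)^M = 1" by (simp flip: power_add mult_2)
    then show ?thesis unfolding ftD_def t0 by (simp add: mult.assoc[symmetric])
  qed
  have sN: "(-1::complex)^N = -((-1)^M)" using M by simp
  have ss: "(-1::complex)^M * (-1)^M = 1" by (simp flip: power_add mult_2)
  have E: "?E = \<gamma> * (fD * FD - ftD * frD) - (fD*(MD - h*HD + H*GD) - gD*(HD - h*GD + H*FD) + sD*(GD - h*FD) - nD*FD)"
    unfolding \<gamma>_def H_def h_def fD_def gD_def sD_def nD_def FD_def GD_def HD_def MD_def ftD_def frD_def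
    by (simp add: algebra_simps)
  have T: "fD*(MD - h*HD + H*GD) - gD*(HD - h*GD + H*FD) + sD*(GD - h*FD) - nD*FD
     = \<gamma> * (fD * FD - ftD * frD)"
    unfolding top[symmetric] main tau0 sN fD_def[symmetric] FD_def[symmetric] frD_def[symmetric]
    by (simp add: algebra_simps ss)
  show ?thesis unfolding E T by simp
qed

lemma psi_shift_n:
  assumes "\<And>j. j \<in> {1..4} \<Longrightarrow> \<omega> j s \<noteq> p"
  shows "psi \<omega> \<rho> p q a b s (n+1) m al be (int k) = p * psi \<omega> \<rho> p q a b s n m al be (int k) + psi \<omega> \<rho> p q a b s n m al be (int (Suc k))"
proof -
  have "\<rho> j s * (- \<omega> j s) powi int k * (p - \<omega> j s) powi (n+1) * (q - \<omega> j s) powi m * (a - \<omega> j s) powi al * (b - \<omega> j s) powi be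
     = p * (\<rho> j s * (- \<omega> j s) powi int k * (p - \<omega> j s) powi n * (q - \<omega> j s) powi m * (a - \<omega> j s) powi al * (b - \<omega> j s) powi be)
       + \<rho> j s * (- \<omega> j s) powi int (Suc k) * (p - \<omega> j s) powi n * (q - \<omega> j s) powi m * (a - \<omega> j s) powi al * (b - \<omega> j s) powi be"
    if j: "j \<in> {1..4}" for j
  proof -
    have "p - \<omega> j s \<noteq> 0" using assms[OF j] by simp
    then have "(p - \<omega> j s) powi (n+1) = (p - \<omega> j s) powi n * (p - \<omega> j s)" by (simp add: power_int_add_1)
    then show ?thesis by (simp only: power_int_of_nat) (simp add: algebra_simps)
  qed
  then show ?thesis unfolding psi_def by (simp add: sum_distrib_left sum.distrib[symmetric])
qed

lemma psi_shift_m: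
  assumes "\<And>j. j \<in> {1..4} \<Longrightarrow> \<omega> j s \<noteq> q"
  shows "psi \<omega> \<rho> p q a b s n (m+1) al be (int k) = q * psi \<omega> \<rho> p q a b s n m al be (int k) + psi \<omega> \<rho> p q a b s n m al be (int (Suc k))"
proof -
  have "\<rho> j s * (- \<omega> j s) powi int k * (p - \<omega> j s) powi n * (q - \<omega> j s) powi (m+1) * (a - \<omega> j s) powi al * (b - \<omega> j s) powi be
     = q * (\<rho> j s * (- \<omega> j s) powi int k * (p - \<omega> j s) powi n * (q - \<omega> j s) powi m * (a - \<omega> j s) powi al * (b - \<omega> j s) powi be)
       + \<rho> j s * (- \<omega> j s) powi int (Suc k) * (p - \<omega> j s) powi n * (q - \<omega> j s) powi m * (a - \<omega> j s) powi al * (b - \<omega> j s) powi be"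
    if j: "j \<in> {1..4}" for j
  proof -
    have "q - \<omega> j s \<noteq> 0" using assms[OF j] by simp
    then have "(q - \<omega> j s) powi (m+1) = (q - \<omega> j s) powi m * (q - \<omega> j s)" by (simp add: power_int_add_1)
    then show ?thesis by (simp only: power_int_of_nat) (simp add: algebra_simps)
  qed
  then show ?thesis unfolding psi_def by (simp add: sum_distrib_left sum.distrib[symmetric])
qed

lemma psi_C:
  assumes roots: "\<And>x. x^4 - \<alpha>3 * x^3 + \<alpha>2 * x^2 - \<alpha>1 * x - cst = (\<Prod>j=1..4. x - \<omega> j s)"
  shows "cst * psi \<omega> \<rho> p q a b s n m al be (int k) = psi \<omega> \<rho> p q a b s n m al be (int (k+4))
     + \<alpha>3 * psi \<omega> \<rho> p q a b s n m al be (int (k+3)) + \<alpha>2 * psi \<omega> \<rho> p q a b s n m al be (int (k+2))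
     + \<alpha>1 * psi \<omega> \<rho> p q a b s n m al be (int (k+1))"
proof -
  have key: "cst * (- \<omega> j s)^k = (- \<omega> j s)^(k+4) + \<alpha>3 * (- \<omega> j s)^(k+3) + \<alpha>2 * (- \<omega> j s)^(k+2) + \<alpha>1 * (- \<omega> j s)^(k+1)"
    if j: "j \<in> {1..4}" for j
  proof -
    let ?w = "\<omega> j s"
    have z: "(\<Prod>j=1..4. ?w - \<omega> j s) = 0" by (rule prod_zero) (use j in auto)
    have "?w^4 - \<alpha>3 * ?w^3 + \<alpha>2 * ?w^2 - \<alpha>1 * ?w - cst = 0" using roots[of ?w] unfolding z .
    then have r: "?w^4 - \<alpha>3 * ?w^3 + \<alpha>2 * ?w^2 - \<alpha>1 * ?w = cst" by simp
    show ?thesis unfolding r[symmetric] by (simp add: power_add algebra_simps power2_eq_square power3_eq_cube power4_eq_xxxx)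
  qed
  have trm: "cst * (\<rho> j s * (- \<omega> j s)^k * P) = \<rho> j s * (- \<omega> j s)^(k+4) * P + \<alpha>3 * (\<rho> j s * (- \<omega> j s)^(k+3) * P)
     + \<alpha>2 * (\<rho> j s * (- \<omega> j s)^(k+2) * P) + \<alpha>1 * (\<rho> j s * (- \<omega> j s)^(k+1) * P)" if j: "j \<in> {1..4}" for j P
  proof -
    have "cst * (\<rho> j s * (- \<omega> j s)^k * P) = (cst * (- \<omega> j s)^k) * (\<rho> j s * P)" by (simp add: algebra_simps)
    also have "\<dots> = ((- \<omega> j s)^(k+4) + \<alpha>3 * (- \<omega> j s)^(k+3) + \<alpha>2 * (- \<omega> j s)^(k+2) + \<alpha>1 * (- \<omega> j s)^(k+1)) * (\<rho> j s * P)"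
      by (simp only: key[OF j])
    finally show ?thesis by (simp add: algebra_simps)
  qed
  show ?thesis unfolding psi_def
    by (simp only: power_int_of_nat sum_distrib_left sum.distrib[symmetric] mult.assoc)
       (rule sum.cong[OF refl], use trm in \<open>simp only: mult.assoc\<close>)
qed

theorem theorem3p1:
  fixes \<alpha>1 \<alpha>2 \<alpha>3 p q a b :: complex
    and N :: nat and al be :: int
    and k :: "nat \<Rightarrow> complex"
    and \<omega> \<rho> :: "nat \<Rightarrow> nat \<Rightarrow> complex"
    and f g h s \<mu> \<theta> \<nu> :: "int \<Rightarrow> int \<Rightarrow> complex"
  assumes dist: "distinct [p, q, a, b]"
    and N1: "N \<ge> 1"
    and roots: "\<And>s x. s \<in> {1..N} \<Longrightarrow>
        x^4 - \<alpha>3 * x^3 + \<alpha>2 * x^2 - \<alpha>1 * x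
          - (k s ^ 4 - \<alpha>3 * k s ^ 3 + \<alpha>2 * k s ^ 2 - \<alpha>1 * k s)
        = (\<Prod>j=1..4. x - \<omega> j s)"
    and root4: "\<And>s. s \<in> {1..N} \<Longrightarrow> \<omega> 4 s = k s"
    and nondeg: "\<And>s j. s \<in> {1..N} \<Longrightarrow> j \<in> {1..4} \<Longrightarrow> \<omega> j s \<notin> {p, q, a, b}"
    and f_def: "f \<equiv> \<lambda>n m. casoratian \<omega> \<rho> p q a b N n m al be [0..int N - 1]"
    and g_def: "g \<equiv> \<lambda>n m. casoratian \<omega> \<rho> p q a b N n m al be ([0..int N - 2] @ [int N])"
    and h_def: "h \<equiv> \<lambda>n m. casoratian \<omega> \<rho> p q a b N n m al be ([0..int N - 2] @ [int N + 1])"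
    and s_def: "s \<equiv> \<lambda>n m. casoratian \<omega> \<rho> p q a b N n m al be ([0..int N - 3] @ [int N - 1, int N])"
    and \<mu>_def: "\<mu> \<equiv> \<lambda>n m. casoratian \<omega> \<rho> p q a b N n m al be ([0..int N - 2] @ [int N + 2])"
    and \<theta>_def: "\<theta> \<equiv> \<lambda>n m. casoratian \<omega> \<rho> p q a b N n m al be ([0..int N - 3] @ [int N - 1, int N + 1])"
    and \<nu>_def: "\<nu> \<equiv> \<lambda>n m. casoratian \<omega> \<rho> p q a b N n m al be ([0..int N - 4] @ [int N - 2, int N - 1, int N])"
  shows "f (n+1) m * (p * g n m + h n m) - g (n+1) m * (p * f n m + g n m) + f n m * s (n+1) m = 0
    \<and> f n (m+1) * (q * g n m + h n m) - g n (m+1) * (q * f n m + g n m) + f n m * s n (m+1) = 0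
    \<and> f (n+1) m * (p * h n m + \<mu> n m) - h (n+1) m * (p * f n m + g n m) + f n m * \<theta> (n+1) m = 0
    \<and> f n (m+1) * (q * h n m + \<mu> n m) - h n (m+1) * (q * f n m + g n m) + f n m * \<theta> n (m+1) = 0
    \<and> f (n+1) m * (p * s n m + \<theta> n m) - f n m * (p * s (n+1) m - \<nu> (n+1) m) - g (n+1) m * s n m = 0
    \<and> f n (m+1) * (q * s n m + \<theta> n m) - f n m * (q * s n (m+1) - \<nu> n (m+1)) - g n (m+1) * s n m = 0
    \<and> (p - q) * (f (n+1) m * f n (m+1) - f n m * f (n+1) (m+1))
        + f (n+1) m * g n (m+1) - f n (m+1) * g (n+1) m = 0
    \<and> G4 \<alpha>1 \<alpha>2 \<alpha>3 (-p) (-q) / (p - q) * (f n m * f (n+1) (m+1) - f (n+1) m * f n (m+1))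
        + H2 \<alpha>2 \<alpha>3 p q * (g n m * f (n+1) (m+1) - f n m * g (n+1) (m+1))
        - (p + q - \<alpha>3) * (g n m * g (n+1) (m+1) - f n m * h (n+1) (m+1) - f (n+1) (m+1) * s n m)
        + g n m * h (n+1) (m+1) - s n m * g (n+1) (m+1) - f n m * \<mu> (n+1) (m+1)
        + \<nu> n m * f (n+1) (m+1) = 0"
proof -
  define cv where "cv n' m' l = (\<lambda>i. if i < N then psi \<omega> \<rho> p q a b (Suc i) n' m' al be l else 0)" for n' m' l
  define U where "U n' m' j = cv n' m' (int j)" for n' m' j
  have cas: "casoratian \<omega> \<rho> p q a b N n' m' al be L = Dt N (map (cv n' m') L)" for n' m' L
  proof (cases "length L = N")
    case True
    have "mat N N (\<lambda>(i, j). psi \<omega> \<rho> p q a b (Suc i) n' m' al be (L ! j)) = mat N N (\<lambda>(i,j). (map (cv n' m') L ! j) i)"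
      by (rule eq_matI) (use True in \<open>auto simp: cv_def\<close>)
    then show ?thesis using True by (simp add: casoratian_def Dt_def)
  next
    case False
    then show ?thesis by (simp add: casoratian_def Dt_def)
  qed
  have nd: "\<omega> j (Suc i) \<noteq> p \<and> \<omega> j (Suc i) \<noteq> q" if "i < N" "j \<in> {1..4}" for i j
    using nondeg[of "Suc i" j] that by auto
  have Rn: "U (n'+1) m' k = (\<lambda>i. p * U n' m' k i + U n' m' (Suc k) i)" for n' m' k
  proof (rule ext)
    fix i show "U (n'+1) m' k i = p * U n' m' k i + U n' m' (Suc k) i"
    proof (cases "i < N")
      case True
      then show ?thesis unfolding U_def cv_def
        using psi_shift_n[of \<omega> "Suc i" p \<rho> q a b n' m' al be k] nd[OF True] by simp
    qed (simp add: U_def cv_def)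
  qed
  have Rm: "U n' (m'+1) k = (\<lambda>i. q * U n' m' k i + U n' m' (Suc k) i)" for n' m' k
  proof (rule ext)
    fix i show "U n' (m'+1) k i = q * U n' m' k i + U n' m' (Suc k) i"
    proof (cases "i < N")
      case True
      then show ?thesis unfolding U_def cv_def
        using psi_shift_m[of \<omega> "Suc i" q \<rho> p a b n' m' al be k] nd[OF True] by simp
    qed (simp add: U_def cv_def)
  qed
  define cc where "cc i = (k (Suc i) ^ 4 - \<alpha>3 * k (Suc i) ^ 3 + \<alpha>2 * k (Suc i) ^ 2 - \<alpha>1 * k (Suc i))" for i
  have RC: "(\<lambda>i. cc i * U n' m' j i) = (\<lambda>i. U n' m' (j+4) i + \<alpha>3 * U n' m' (j+3) i + \<alpha>2 * U n' m' (j+2) i + \<alpha>1 * U n' m' (j+1) i)" for n' m' j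
  proof (rule ext)
    fix i
    show "cc i * U n' m' j i = U n' m' (j+4) i + \<alpha>3 * U n' m' (j+3) i + \<alpha>2 * U n' m' (j+2) i + \<alpha>1 * U n' m' (j+1) i"
    proof (cases "i < N")
      case True
      have "Suc i \<in> {1..N}" using True by simp
      from roots[OF this] have "\<And>x. x^4 - \<alpha>3 * x^3 + \<alpha>2 * x^2 - \<alpha>1 * x - cc i = (\<Prod>j=1..4. x - \<omega> j (Suc i))"
        by (simp add: cc_def)
      from psi_C[where \<omega>=\<omega> and s="Suc i" and cst="cc i", OF this, of \<rho> p q a b n' m' al be j] show ?thesis unfolding U_def cv_def using True by simp
    qed (simp add: U_def cv_def)
  qed
  have upto_int: "[0..int K - 1] = map int [0..<K]" for K
  proof (induction K)
    case 0 then show ?case by simp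
  next
    case (Suc K)
    have "[0..int (Suc K) - 1] = [0..int K - 1] @ [int K]" by (subst upto_rec2) auto
    then show ?case using Suc by simp
  qed
  have Ueq: "U n' m' = cv n' m' \<circ> int" for n' m' by (rule ext) (simp add: U_def)
  have mm: "map (cv n' m') (map int L) = map (U n' m') L" for n' m' L by (simp add: U_def)
  have l1: "[0..int N - 2] = map int [0..<N-1]" using upto_int[of "N-1"] N1 by (simp add: of_nat_diff)
  have fE: "f n' m' = Dt N (map (U n' m') [0..<N])" for n' m'
    unfolding f_def cas upto_int mm ..
  have gE: "g n' m' = Dt N (map (U n' m') ([0..<N-1]@[N]))" for n' m'
    unfolding g_def cas l1 mm[symmetric] by simp
  have hE: "h n' m' = Dt N (map (U n' m') ([0..<N-1]@[N+1]))" for n' m'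
    unfolding h_def cas l1 mm[symmetric] by (simp add: ac_simps)
  have muE: "\<mu> n' m' = Dt N (map (U n' m') ([0..<N-1]@[N+2]))" for n' m'
    unfolding \<mu>_def cas l1 mm[symmetric] by (simp add: ac_simps)
  have sE: "s n' m' = (if 2 \<le> N then Dt N (map (U n' m') ([0..<N-2]@[N-1,N])) else 0)" for n' m'
  proof (cases "2 \<le> N")
    case True
    have "[0..int N - 3] = map int [0..<N-2]" using upto_int[of "N-2"] True by (simp add: of_nat_diff)
    then show ?thesis unfolding s_def cas using True by (simp add: Ueq of_nat_diff ac_simps)
  next
    case False
    then show ?thesis unfolding s_def cas by (simp add: Dt_len)
  qed
  have thE: "\<theta> n' m' = (if 2 \<le> N then Dt N (map (U n' m') ([0..<N-2]@[N-1,N+1])) else 0)" for n' m'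
  proof (cases "2 \<le> N")
    case True
    have "[0..int N - 3] = map int [0..<N-2]" using upto_int[of "N-2"] True by (simp add: of_nat_diff)
    then show ?thesis unfolding \<theta>_def cas using True by (simp add: Ueq of_nat_diff ac_simps)
  next
    case False
    then show ?thesis unfolding \<theta>_def cas by (simp add: Dt_len)
  qed
  have nuE: "\<nu> n' m' = (if 3 \<le> N then Dt N (map (U n' m') ([0..<N-3]@[N-2,N-1,N])) else 0)" for n' m'
  proof (cases "3 \<le> N")
    case True
    have "[0..int N - 4] = map int [0..<N-3]" using upto_int[of "N-3"] True by (simp add: of_nat_diff)
    then show ?thesis unfolding \<nu>_def cas using True by (simp add: Ueq of_nat_diff ac_simps)
  next
    case False
    then have "length ([0..int N - 4] @ [int N - 2, int N - 1, int N]) \<noteq> N" by simp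
    then show ?thesis unfolding \<nu>_def cas using False by (simp add: Dt_len del: length_append length_upto)
  qed
  have vt: "U (n+1) (m+1) j = (\<lambda>i. q * U (n+1) m j i + U (n+1) m (Suc j) i)" for j by (rule Rm)
  have vr: "U (n+1) (m+1) j = (\<lambda>i. p * U n (m+1) j i + U n (m+1) (Suc j) i)" for j by (rule Rn)
  have e1: "f (n+1) m * (p * g n m + h n m) - g (n+1) m * (p * f n m + g n m) + f n m * s (n+1) m = 0"
    unfolding fE gE hE sE by (rule eq1_abs[where t="U (n+1) m" and u="U n m", OF N1 Rn[of n m]])
  have e2: "f n (m+1) * (q * g n m + h n m) - g n (m+1) * (q * f n m + g n m) + f n m * s n (m+1) = 0"
    unfolding fE gE hE sE by (rule eq1_abs[where t="U n (m+1)" and u="U n m", OF N1 Rm[of n m]])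
  have e3: "f (n+1) m * (p * h n m + \<mu> n m) - h (n+1) m * (p * f n m + g n m) + f n m * \<theta> (n+1) m = 0"
    unfolding fE gE hE muE thE by (rule eq3_abs[where t="U (n+1) m" and u="U n m", OF N1 Rn[of n m]])
  have e4: "f n (m+1) * (q * h n m + \<mu> n m) - h n (m+1) * (q * f n m + g n m) + f n m * \<theta> n (m+1) = 0"
    unfolding fE gE hE muE thE by (rule eq3_abs[where t="U n (m+1)" and u="U n m", OF N1 Rm[of n m]])
  have e5: "f (n+1) m * (p * s n m + \<theta> n m) - f n m * (p * s (n+1) m - \<nu> (n+1) m) - g (n+1) m * s n m = 0"
  proof (cases "2 \<le> N")
    case True
    show ?thesis unfolding fE gE sE thE nuE using True by (simp only: if_True) (rule eq5_abs[where t="U (n+1) m" and u="U n m", OF True Rn[of n m]])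
  next
    case False
    then show ?thesis unfolding sE thE nuE by simp
  qed
  have e6: "f n (m+1) * (q * s n m + \<theta> n m) - f n m * (q * s n (m+1) - \<nu> n (m+1)) - g n (m+1) * s n m = 0"
  proof (cases "2 \<le> N")
    case True
    show ?thesis unfolding fE gE sE thE nuE using True by (simp only: if_True) (rule eq5_abs[where t="U n (m+1)" and u="U n m", OF True Rm[of n m]])
  next
    case False
    then show ?thesis unfolding sE thE nuE by simp
  qed
  have e7: "(p - q) * (f (n+1) m * f n (m+1) - f n m * f (n+1) (m+1))
        + f (n+1) m * g n (m+1) - f n (m+1) * g (n+1) m = 0"
    unfolding fE gE by (rule eq7_abs[where t="U (n+1) m" and u="U n m" and r="U n (m+1)" and v="U (n+1) (m+1)", OF N1 Rn[of n m] Rm[of n m] vr])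
  have pq: "p \<noteq> q" using dist by simp
  have e8: "G4 \<alpha>1 \<alpha>2 \<alpha>3 (-p) (-q) / (p - q) * (f n m * f (n+1) (m+1) - f (n+1) m * f n (m+1))
        + H2 \<alpha>2 \<alpha>3 p q * (g n m * f (n+1) (m+1) - f n m * g (n+1) (m+1))
        - (p + q - \<alpha>3) * (g n m * g (n+1) (m+1) - f n m * h (n+1) (m+1) - f (n+1) (m+1) * s n m)
        + g n m * h (n+1) (m+1) - s n m * g (n+1) (m+1) - f n m * \<mu> (n+1) (m+1)
        + \<nu> n m * f (n+1) (m+1) = 0"
    unfolding fE gE hE muE sE nuE by (rule eq8_abs[where t="U (n+1) m" and u="U n m" and r="U n (m+1)" and v="U (n+1) (m+1)" and c=cc, OF N1 pq Rn[of n m] Rm[of n m] vt RC[of n m]])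
  show ?thesis using e1 e2 e3 e4 e5 e6 e7 e8 by blast
qed

end
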